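(* Let $B=\mathrm{GF}(p^m)$ and $F=\mathrm{GF}(p^{mt})$ and assume $t$ is divisible by $p$. Let $\alpha^*\neq\overline{\alpha}$ be elements of $F$, and let $K_{\alpha^*,\overline{\alpha}}=\{z\in F:\mathrm{Tr}_{F/B}(z(\overline{\alpha}-\alpha^* ))=0\}$. Let $\{u_1,\dots,u_{t-1}\}$ and $\{v_1,\dots,v_{t-1}\}$ be two bases of $K_{\alpha^*,\overline{\alpha}}$ over $B$, completed to bases $\{u_1,\dots,u_t\}$ and $\{v_1,\dots,v_t\}$ of $F$ over $B$. For $i\in[t]$ set $p_i(x)=\dfrac{\mathrm{Tr}_{F/B}(u_i(x-\alpha^* ))}{x-\alpha^*}$ and $q_i(x)=\dfrac{\mathrm{Tr}_{F/B}(v_i(x-\overline{\alpha}))}{x-\overline{\alpha}}$. Let $f\in F[x]$. Then $\mathrm{Tr}_{F/B}\big(p_t(\overline{\alpha})f(\overline{\alpha})\big)$ is a $B$-linear combination of the traces $\mathrm{Tr}_{F/B}\big(q_i(\overline{\alpha})f(\overline{\alpha})\big)$, $i\in[t-1]$, and $\mathrm{Tr}_{F/B}\big(q_t(\alpha^* )f(\alpha^* )\big)$ is a $B$-linear combination of the traces $\mathrm{Tr}_{F/B}\big(p_i(\alpha^* )f(\alpha^* )\big)$, $i\in[t-1]$.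
   Context: $\mathrm{Tr}_{F/B}(x)=\sum_{i=0}^{t-1}x^{|B|^i}$ is the field trace; $[t]=\{1,\dots,t\}$. *)

theory Defs
  imports "HOL-Computational_Algebra.Polynomial"
begin

text \<open>The subfield B = GF(q), q = p^m, of a finite field F: the roots of x^q - x.\<close>
definition subfieldB :: "nat \<Rightarrow> 'a::field set" where
  "subfieldB q = {x. x ^ q = x}"

definition trace :: "nat \<Rightarrow> nat \<Rightarrow> 'a::field \<Rightarrow> 'a" where
  "trace q t x = (\<Sum>i<t. x ^ (q ^ i))"

text \<open>The polynomial Tr_{F/B}(u (x - a)) in the variable x.\<close>
definition trace_poly :: "nat \<Rightarrow> nat \<Rightarrow> 'a::field \<Rightarrow> 'a \<Rightarrow> 'a poly" where
  "trace_poly q t u a = (\<Sum>i<t. smult (u ^ (q ^ i)) ([:- a, 1:] ^ (q ^ i)))"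

text \<open>The polynomial Tr_{F/B}(u (x - a)) / (x - a) (exact division).\<close>
definition repair_poly :: "nat \<Rightarrow> nat \<Rightarrow> 'a::field \<Rightarrow> 'a \<Rightarrow> 'a poly" where
  "repair_poly q t u a = trace_poly q t u a div [:- a, 1:]"

definition lin_indep_over :: "'a::field set \<Rightarrow> (nat \<Rightarrow> 'a) \<Rightarrow> nat set \<Rightarrow> bool" where
  "lin_indep_over B v I =
     (\<forall>c. (\<forall>i\<in>I. c i \<in> B) \<and> (\<Sum>i\<in>I. c i * v i) = 0 \<longrightarrow> (\<forall>i\<in>I. c i = 0))"

definition span_over :: "'a::field set \<Rightarrow> (nat \<Rightarrow> 'a) \<Rightarrow> nat set \<Rightarrow> 'a set" where
  "span_over B v I = {\<Sum>i\<in>I. c i * v i | c. \<forall>i\<in>I. c i \<in> B}"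

definition basis_over :: "'a::field set \<Rightarrow> (nat \<Rightarrow> 'a) \<Rightarrow> nat set \<Rightarrow> 'a set \<Rightarrow> bool" where
  "basis_over B v I S = (lin_indep_over B v I \<and> span_over B v I = S)"

end

theory Submission
  imports Defs "HOL-Number_Theory.Residues"
begin


lemma field_power_card_same:
  fixes x :: "'a::{field,finite}"
  shows "x ^ card (UNIV :: 'a set) = x"
proof (cases "x = 0")
  case False
  have "x * (\<Prod>y\<in>UNIV-{0}. x * y) = x * x ^ (card (UNIV :: 'a set) - 1) * \<Prod>(UNIV-{0})"
    by (simp add: prod.distrib mult_ac)
  also have "x * x ^ (card (UNIV :: 'a set) - 1) = x ^ Suc (card (UNIV :: 'a set) - 1)"
    by (subst power_Suc) auto
  also have "Suc (card (UNIV :: 'a set) - 1) = card (UNIV :: 'a set)"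
    using finite_UNIV_card_ge_0[where ?'a = 'a] by simp
  also have "(\<Prod>y\<in>UNIV-{0}. x * y) = (\<Prod>y\<in>UNIV-{0}. y)"
    by (rule prod.reindex_bij_witness[of _ "\<lambda>y. y / x" "\<lambda>y. x * y"]) (use False in auto)
  finally show ?thesis
    by simp
qed (use finite_UNIV_card_ge_0[where ?'a = 'a] in auto)

lemma char_eq:
  assumes "prime p" "card (UNIV :: 'a::{field,finite} set) = p ^ k"
  shows "CHAR('a) = p"
proof -
  have pos: "CHAR('a) > 0" by (rule finite_imp_CHAR_pos) simp
  have pr: "prime CHAR('a)" using prime_CHAR_semidom[OF pos] .
  have "CHAR('a) dvd p ^ k" using CHAR_dvd_CARD[where 'a='a] assms(2) by simp
  hence "CHAR('a) dvd p" using pr prime_dvd_power by blast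
  thus ?thesis using pr assms(1) primes_dvd_imp_eq by blast
qed

lemma trace_add:
  fixes x y :: "'a::field"
  assumes "prime CHAR('a)" "q = CHAR('a) ^ m"
  shows "trace q t (x + y) = trace q t x + trace q t y"
proof -
  have "(x + y) ^ (q ^ i) = x ^ (q ^ i) + y ^ (q ^ i)" for i
    by (rule freshmans_dream'[OF assms(1), where n="m*i"]) (simp add: assms(2) power_mult)
  thus ?thesis unfolding trace_def by (simp add: sum.distrib)
qed

lemma trace_zero:
  assumes "q > 0"
  shows "trace q t (0::'a::field) = 0"
  unfolding trace_def using assms by (simp add: power_0_left)

lemma trace_neg:
  fixes x :: "'a::field"
  assumes "prime CHAR('a)" "q = CHAR('a) ^ m"
  shows "trace q t (- x) = - trace q t x"
proof -
  have "q > 0" using assms prime_gt_0_nat by simp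
  have "trace q t (x + - x) = trace q t x + trace q t (- x)" by (rule trace_add[OF assms])
  thus ?thesis using trace_zero[OF \<open>q > 0\<close>, where 'a='a and t=t] by (simp add: eq_neg_iff_add_eq_0 add.commute)
qed

lemma trace_sum:
  fixes g :: "nat \<Rightarrow> 'a::field"
  assumes "prime CHAR('a)" "q = CHAR('a) ^ m" "finite A"
  shows "trace q t (\<Sum>i\<in>A. g i) = (\<Sum>i\<in>A. trace q t (g i))"
  using assms(3)
proof (induction A rule: finite_induct)
  case empty
  have "q > 0" using assms prime_gt_0_nat by simp
  then show ?case using trace_zero by simp
next
  case (insert x F)
  then show ?case by (simp add: trace_add[OF assms(1,2)])
qed

lemma B_pow:
  fixes c :: "'a::field"
  assumes "c ^ q = c"
  shows "c ^ (q ^ i) = c"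
proof (induction i)
  case (Suc i)
  have "c ^ (q ^ Suc i) = (c ^ q) ^ (q ^ i)" by (simp add: power_mult[symmetric] mult.commute)
  then show ?case using assms Suc by simp
qed simp

lemma trace_scale:
  fixes c x :: "'a::field"
  assumes "c \<in> subfieldB q"
  shows "trace q t (c * x) = c * trace q t x"
proof -
  have "c ^ q = c" using assms unfolding subfieldB_def by simp
  hence "c ^ (q ^ i) = c" for i by (rule B_pow)
  thus ?thesis unfolding trace_def by (simp add: power_mult_distrib sum_distrib_left)
qed

lemma B_mult:
  assumes "a \<in> subfieldB q" "b \<in> subfieldB q"
  shows "(a::'a::field) * b \<in> subfieldB q"
  using assms unfolding subfieldB_def by (simp add: power_mult_distrib)

lemma trace_in_B:
  fixes x :: "'a::{field,finite}"
  assumes "prime CHAR('a)" "q = CHAR('a) ^ m" "card (UNIV :: 'a set) = q ^ t"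
  shows "trace q t x \<in> subfieldB q"
proof -
  define g where "g i = x ^ (q ^ i)" for i
  have "trace q t x ^ q = (\<Sum>i<t. g i ^ q)"
    unfolding trace_def g_def by (rule freshmans_dream_sum'[OF assms(1,2)])
  also have "\<dots> = (\<Sum>i<t. g (Suc i))"
    unfolding g_def by (simp add: power_mult[symmetric] mult.commute)
  also have "\<dots> = (\<Sum>i<t. g i)"
  proof -
    have gt: "g t = g 0" unfolding g_def using field_power_card_same[of x] assms(3) by simp
    have "(\<Sum>i<t. g (Suc i)) + g 0 = (\<Sum>i<t. g i) + g t"
      by (metis sum.lessThan_Suc_shift sum.lessThan_Suc add.commute)
    thus ?thesis using gt by simp
  qed
  finally show ?thesis unfolding subfieldB_def trace_def g_def by simp
qed

lemma repair_eq:
  fixes u a :: "'a::field"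
  assumes "q > 0"
  shows "repair_poly q t u a = (\<Sum>i<t. Polynomial.smult (u ^ (q ^ i)) ([:- a, 1:] ^ (q ^ i - 1)))"
proof -
  have eq: "trace_poly q t u a = [:- a, 1:] * (\<Sum>i<t. Polynomial.smult (u ^ (q ^ i)) ([:- a, 1:] ^ (q ^ i - 1)))"
    unfolding trace_poly_def sum_distrib_left
  proof (rule sum.cong[OF refl])
    fix i
    have "q ^ i > 0" using assms by simp
    hence "[:- a, 1:] ^ (q ^ i) = [:- a, 1:] * [:- a, 1:] ^ (q ^ i - 1)"
      by (metis Suc_diff_1 power_Suc)
    thus "Polynomial.smult (u ^ q ^ i) ([:- a, 1:] ^ q ^ i) =
          [:- a, 1:] * Polynomial.smult (u ^ q ^ i) ([:- a, 1:] ^ (q ^ i - 1))" by simp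
  qed
  have ne: "[:- a, 1:] \<noteq> (0::'a poly)" by simp
  show ?thesis unfolding repair_poly_def eq by (rule nonzero_mult_div_cancel_left[OF ne])
qed

lemma repair_at_other:
  fixes u a b :: "'a::field"
  assumes "q > 0"
  shows "poly (repair_poly q t u a) b * (b - a) = trace q t (u * (b - a))"
proof -
  have "(b - a) ^ (q ^ i - 1) * (b - a) = (b - a) ^ (q ^ i)" for i
  proof -
    have "q ^ i > 0" using assms by simp
    thus ?thesis by (metis Suc_diff_1 power_Suc2)
  qed
  thus ?thesis unfolding repair_eq[OF assms] trace_def
    by (simp add: poly_sum sum_distrib_right power_mult_distrib mult.assoc)
qed

lemma repair_at_self:
  fixes u a :: "'a::field"
  assumes "q > 1" "t > 0"
  shows "poly (repair_poly q t u a) a = u"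
proof -
  have "poly (repair_poly q t u a) a = (\<Sum>i<t. u ^ (q ^ i) * 0 ^ (q ^ i - 1))"
    unfolding repair_eq[of q, OF order.strict_trans[OF zero_less_one assms(1)]]
    by (simp add: poly_sum)
  also have "\<dots> = (\<Sum>i\<in>{0}. u ^ (q ^ i) * 0 ^ (q ^ i - 1))"
  proof (rule sum.mono_neutral_right)
    show "\<forall>i\<in>{..<t} - {0}. u ^ q ^ i * 0 ^ (q ^ i - 1) = 0"
    proof
      fix i assume "i \<in> {..<t} - {0}"
      hence "i > 0" by simp
      hence "q ^ i > 1" using assms one_less_power by blast
      thus "u ^ q ^ i * 0 ^ (q ^ i - 1) = (0::'a)" by simp
    qed
  qed (use assms in auto)
  finally show ?thesis by simp
qed

theorem corollary2:
  fixes p m t :: nat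
    and a_star a_bar :: "'a::{field,finite}"
    and u v :: "nat \<Rightarrow> 'a"
    and f :: "'a poly"
  assumes "prime p" and "m > 0" and "t > 0"
    and "card (UNIV :: 'a set) = p ^ (m * t)"
    and "p dvd t"
    and "a_star \<noteq> a_bar"
    and "basis_over (subfieldB (p ^ m)) u {1..t-1}
           {z. trace (p ^ m) t (z * (a_bar - a_star)) = 0}"
    and "basis_over (subfieldB (p ^ m)) v {1..t-1}
           {z. trace (p ^ m) t (z * (a_bar - a_star)) = 0}"
    and "basis_over (subfieldB (p ^ m)) u {1..t} UNIV"
    and "basis_over (subfieldB (p ^ m)) v {1..t} UNIV"
  shows "(\<exists>c. (\<forall>i\<in>{1..t-1}. c i \<in> subfieldB (p ^ m)) \<and>
            trace (p ^ m) t (poly (repair_poly (p ^ m) t (u t) a_star) a_bar * poly f a_bar)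
            = (\<Sum>i\<in>{1..t-1}. c i *
                 trace (p ^ m) t (poly (repair_poly (p ^ m) t (v i) a_bar) a_bar * poly f a_bar)))
       \<and> (\<exists>c. (\<forall>i\<in>{1..t-1}. c i \<in> subfieldB (p ^ m)) \<and>
            trace (p ^ m) t (poly (repair_poly (p ^ m) t (v t) a_bar) a_star * poly f a_star)
            = (\<Sum>i\<in>{1..t-1}. c i *
                 trace (p ^ m) t (poly (repair_poly (p ^ m) t (u i) a_star) a_star * poly f a_star)))"
proof -
  let ?B = "subfieldB (p ^ m) :: 'a set"
  let ?K = "{z. trace (p ^ m) t (z * (a_bar - a_star)) = 0} :: 'a set"
  define q where "q = p ^ m"
  have ch: "CHAR('a) = p" using char_eq[OF assms(1,4)] .
  have pr: "prime CHAR('a)" using ch assms(1) by simp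
  have qc: "q = CHAR('a) ^ m" using ch q_def by simp
  have q1: "q > 1" unfolding q_def using assms(1,2) prime_gt_1_nat one_less_power by blast
  have q0: "q > 0" using q1 by simp
  have card: "card (UNIV :: 'a set) = q ^ t" using assms(4) by (simp add: q_def power_mult)
  have tr1: "trace q t (1::'a) = 0"
  proof -
    have "trace q t (1::'a) = of_nat t" unfolding trace_def by simp
    also have "\<dots> = 0" using assms(5) ch by (simp add: of_nat_eq_0_iff_char_dvd)
    finally show ?thesis .
  qed
  define d where "d = a_bar - a_star"
  have d0: "d \<noteq> 0" using assms(6) d_def by simp
  have spanv: "span_over ?B v {1..t-1} = ?K" using assms(8) unfolding basis_over_def by simp
  have spanu: "span_over ?B u {1..t-1} = ?K" using assms(7) unfolding basis_over_def by simp
  have lin: "trace q t (lam * (\<Sum>i\<in>{1..t-1}. c i * w i) * y)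
      = (\<Sum>i\<in>{1..t-1}. (lam * c i) * trace q t (w i * y))"
    if "lam \<in> subfieldB q" "\<forall>i\<in>{1..t-1}. c i \<in> subfieldB q" for lam c w and y :: 'a
  proof -
    have "trace q t (lam * (\<Sum>i\<in>{1..t-1}. c i * w i) * y)
        = lam * trace q t (\<Sum>i\<in>{1..t-1}. c i * (w i * y))"
      using trace_scale[OF that(1)] by (simp add: sum_distrib_right mult.assoc)
    also have "\<dots> = lam * (\<Sum>i\<in>{1..t-1}. trace q t (c i * (w i * y)))"
      using trace_sum[OF pr qc] by simp
    also have "\<dots> = (\<Sum>i\<in>{1..t-1}. (lam * c i) * trace q t (w i * y))"
      unfolding sum_distrib_left
    proof (rule sum.cong[OF refl])
      fix i assume "i \<in> {1..t-1}"
      hence ci: "c i \<in> subfieldB q" using that(2) by blast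
      show "lam * trace q t (c i * (w i * y)) = lam * c i * trace q t (w i * y)"
        using trace_scale[OF ci, of t "w i * y"] by (simp add: mult.assoc)
    qed
    finally show ?thesis .
  qed
  show ?thesis
  proof
    define w where "w = inverse d"
    have "w \<in> ?K" using d0 tr1 by (simp add: w_def d_def[symmetric] q_def[symmetric])
    then obtain c where c: "\<forall>i\<in>{1..t-1}. c i \<in> ?B" "w = (\<Sum>i\<in>{1..t-1}. c i * v i)"
      using spanv unfolding span_over_def by auto
    define l where "l = trace q t (u t * d)"
    have lB: "l \<in> subfieldB q" unfolding l_def by (rule trace_in_B[OF pr qc card])
    have P: "poly (repair_poly q t (u t) a_star) a_bar = l * w"
      using repair_at_other[OF q0, of t "u t" a_star a_bar] d0
      by (simp add: l_def w_def d_def[symmetric] field_simps)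
    have Q: "poly (repair_poly q t (v i) a_bar) a_bar = v i" for i
      using repair_at_self[OF q1 assms(3)] .
    show "\<exists>c. (\<forall>i\<in>{1..t-1}. c i \<in> ?B) \<and>
            trace (p ^ m) t (poly (repair_poly (p ^ m) t (u t) a_star) a_bar * poly f a_bar)
            = (\<Sum>i\<in>{1..t-1}. c i *
                 trace (p ^ m) t (poly (repair_poly (p ^ m) t (v i) a_bar) a_bar * poly f a_bar))"
      apply (rule exI[of _ "\<lambda>i. l * c i"])
      using lin[OF lB, of c v "poly f a_bar"] c lB B_mult
      unfolding q_def[symmetric] P Q by (auto simp: q_def)
  next
    define w where "w = inverse (- d)"
    have "trace q t (w * d) = 0" using d0 tr1 trace_neg[OF pr qc, of t 1]
      by (simp add: w_def)
    hence "w \<in> ?K" by (simp add: d_def q_def)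
    then obtain c where c: "\<forall>i\<in>{1..t-1}. c i \<in> ?B" "w = (\<Sum>i\<in>{1..t-1}. c i * u i)"
      using spanu unfolding span_over_def by auto
    define l where "l = trace q t (v t * (- d))"
    have lB: "l \<in> subfieldB q" unfolding l_def by (rule trace_in_B[OF pr qc card])
    have P: "poly (repair_poly q t (v t) a_bar) a_star = l * w"
      using repair_at_other[OF q0, of t "v t" a_bar a_star] d0
      by (simp add: l_def w_def d_def field_simps)
    have Q: "poly (repair_poly q t (u i) a_star) a_star = u i" for i
      using repair_at_self[OF q1 assms(3)] .
    show "\<exists>c. (\<forall>i\<in>{1..t-1}. c i \<in> ?B) \<and>
            trace (p ^ m) t (poly (repair_poly (p ^ m) t (v t) a_bar) a_star * poly f a_star)
            = (\<Sum>i\<in>{1..t-1}. c i *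
                 trace (p ^ m) t (poly (repair_poly (p ^ m) t (u i) a_star) a_star * poly f a_star))"
      apply (rule exI[of _ "\<lambda>i. l * c i"])
      using lin[OF lB, of c u "poly f a_star"] c lB B_mult
      unfolding q_def[symmetric] P Q by (auto simp: q_def)
  qed
qed

end
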